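(* Let $d\ge 1$ and let $\mathbf{X}=(X_1,\dots,X_d)$ and $\mathbf{Y}=(Y_1,\dots,Y_d)$ be random vectors on $\mathbb{R}^d$ with distribution functions $F$ and $G$, each satisfying condition $(\mathcal{H})$. Then $F=G$ if and only if $\|\mathbf{x}\|_{\mathbf{X}}=\|\mathbf{x}\|_{\mathbf{Y}}$ for all $\mathbf{x}\in\mathbb{R}^{d+1}$.
   Context: Condition $(\mathcal{H})$ on a random vector $\mathbf{X}=(X_1,\dots,X_d)$: each $X_i$ is almost surely nonnegative with $0<E(X_i)<\infty$. For such $\mathbf{X}$ and $\mathbf{x}=(x_0,x_1,\dots,x_d)\in\mathbb{R}^{d+1}$, define $\|\mathbf{x}\|_{\mathbf{X}}:=E\big(\max(|x_0|,|x_1|X_1,\dots,|x_d|X_d)\big)$. *)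

theory Defs
  imports "HOL-Probability.Probability"
begin

text \<open>A random vector X = (X_1,...,X_d) on a probability space M is represented by
  its components X i, i \<in> {1..d}.\<close>
definition cond_H :: "'a measure \<Rightarrow> (nat \<Rightarrow> 'a \<Rightarrow> real) \<Rightarrow> nat \<Rightarrow> bool" where
  "cond_H M X d \<longleftrightarrow>
     (\<forall>i\<in>{1..d}. X i \<in> borel_measurable M \<and> (AE \<omega> in M. 0 \<le> X i \<omega>)
        \<and> integrable M (X i) \<and> 0 < (\<integral>\<omega>. X i \<omega> \<partial>M))"

definition joint_cdf :: "'a measure \<Rightarrow> (nat \<Rightarrow> 'a \<Rightarrow> real) \<Rightarrow> nat \<Rightarrow> (nat \<Rightarrow> real) \<Rightarrow> real" where
  "joint_cdf M X d t = measure M {\<omega> \<in> space M. \<forall>i\<in>{1..d}. X i \<omega> \<le> t i}"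

definition normX :: "'a measure \<Rightarrow> (nat \<Rightarrow> 'a \<Rightarrow> real) \<Rightarrow> nat \<Rightarrow> (nat \<Rightarrow> real) \<Rightarrow> real" where
  "normX M X d x = (\<integral>\<omega>. Max ({\<bar>x 0\<bar>} \<union> {\<bar>x i\<bar> * X i \<omega> | i. i \<in> {1..d}}) \<partial>M)"

end

theory Submission
  imports Defs
begin

definition cset :: "'a measure \<Rightarrow> (nat \<Rightarrow> 'a \<Rightarrow> real) \<Rightarrow> nat \<Rightarrow> (nat \<Rightarrow> real) \<Rightarrow> 'a set" where
  "cset M X d t = {\<omega> \<in> space M. \<forall>i\<in>{1..d}. X i \<omega> \<le> t i}"

lemma cset_sets:
  assumes "cond_H M X d"
  shows "cset M X d t \<in> sets M"
  unfolding cset_def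
proof (rule sets.sets_Collect_finite_All)
  fix i assume "i \<in> {1..d}"
  then have [measurable]: "X i \<in> borel_measurable M" using assms by (auto simp: cond_H_def)
  show "{\<omega> \<in> space M. X i \<omega> \<le> t i} \<in> sets M" by measurable
qed simp

lemma cdf_cset: "joint_cdf M X d t = measure M (cset M X d t)"
  by (simp add: joint_cdf_def cset_def)

lemma cdf_decseq:
  assumes P: "prob_space M" and H: "cond_H M X d"
    and dec: "\<And>n i. i \<in> {1..d} \<Longrightarrow> s (Suc n) i \<le> s n i"
    and lim: "\<And>i. i \<in> {1..d} \<Longrightarrow> (\<lambda>n. s n i) \<longlonglongrightarrow> t i"
  shows "(\<lambda>n. joint_cdf M X d (s n)) \<longlonglongrightarrow> joint_cdf M X d t"
proof -
  interpret prob_space M by (fact P)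
  have "(\<lambda>n. measure M (cset M X d (s n))) \<longlonglongrightarrow> measure M (\<Inter>n. cset M X d (s n))"
  proof (rule finite_Lim_measure_decseq)
    show "range (\<lambda>n. cset M X d (s n)) \<subseteq> sets M" using cset_sets[OF H] by auto
    show "decseq (\<lambda>n. cset M X d (s n))"
    proof (rule decseq_SucI)
      fix n show "cset M X d (s (Suc n)) \<subseteq> cset M X d (s n)"
        unfolding cset_def using dec order_trans by fastforce
    qed
  qed
  moreover have "(\<Inter>n. cset M X d (s n)) = cset M X d t"
  proof
    show "(\<Inter>n. cset M X d (s n)) \<subseteq> cset M X d t"
    proof
      fix \<omega> assume a: "\<omega> \<in> (\<Inter>n. cset M X d (s n))"
      then have "\<omega> \<in> space M" by (auto simp: cset_def)
      moreover have "X i \<omega> \<le> t i" if "i \<in> {1..d}" for i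
        by (rule LIMSEQ_le_const[OF lim[OF that]]) (use a that in \<open>auto simp: cset_def\<close>)
      ultimately show "\<omega> \<in> cset M X d t" by (auto simp: cset_def)
    qed
    show "cset M X d t \<subseteq> (\<Inter>n. cset M X d (s n))"
    proof
      fix \<omega> assume a: "\<omega> \<in> cset M X d t"
      have "t i \<le> s n i" if "i \<in> {1..d}" for i n
      proof -
        have "decseq (\<lambda>n. s n i)" using dec[OF that] by (simp add: decseq_Suc_iff)
        then show ?thesis by (rule decseq_ge[OF _ lim[OF that]])
      qed
      show "\<omega> \<in> (\<Inter>n. cset M X d (s n))"
      proof
        fix n
        have "X i \<omega> \<le> s n i" if "i \<in> {1..d}" for i
          using a that order_trans[of "X i \<omega>" "t i" "s n i"] \<open>\<And>i n. i \<in> {1..d} \<Longrightarrow> t i \<le> s n i\<close>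
          by (auto simp: cset_def)
        then show "\<omega> \<in> cset M X d (s n)" using a by (auto simp: cset_def)
      qed
    qed
  qed
  ultimately show ?thesis by (simp add: cdf_cset)
qed

lemma Max_split:
  fixes X :: "nat \<Rightarrow> 'a \<Rightarrow> real" and x :: "nat \<Rightarrow> real" and d :: nat
  assumes "d \<ge> 1"
  shows "Max ({\<bar>x 0\<bar>} \<union> {\<bar>x i\<bar> * X i \<omega> | i. i \<in> {1..d}})
       = max \<bar>x 0\<bar> (Max ((\<lambda>i. \<bar>x i\<bar> * X i \<omega>) ` {1..d}))"
proof -
  have "{\<bar>x i\<bar> * X i \<omega> | i. i \<in> {1..d}} = (\<lambda>i. \<bar>x i\<bar> * X i \<omega>) ` {1..d}" by auto
  moreover have "(\<lambda>i. \<bar>x i\<bar> * X i \<omega>) ` {1..d} \<noteq> {}" using assms by (simp add: atLeastatMost_empty_iff)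
  ultimately show ?thesis by simp
qed

lemma normX_alt:
  assumes "d \<ge> 1"
  shows "normX M X d x = (\<integral>\<omega>. max \<bar>x 0\<bar> (Max ((\<lambda>i. \<bar>x i\<bar> * X i \<omega>) ` {1..d})) \<partial>M)"
  unfolding normX_def Max_split[OF assms] ..

lemma W_meas:
  assumes H: "cond_H M X d"
  shows "(\<lambda>\<omega>. max c (Max ((\<lambda>i. \<bar>x i\<bar> * X i \<omega>) ` {1..d}))) \<in> borel_measurable M"
proof -
  have [measurable]: "(\<lambda>\<omega>. Max ((\<lambda>i. \<bar>x i\<bar> * X i \<omega>) ` {1..d})) \<in> borel_measurable M"
  proof (rule borel_measurable_Max)
    fix i assume "i \<in> {1..d}"
    then have [measurable]: "X i \<in> borel_measurable M" using H by (auto simp: cond_H_def)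
    show "(\<lambda>\<omega>. \<bar>x i\<bar> * X i \<omega>) \<in> borel_measurable M" by measurable
  qed simp
  show ?thesis by measurable
qed

lemma W_int:
  assumes P: "prob_space M" and H: "cond_H M X d" and d: "d \<ge> 1"
  shows "integrable M (\<lambda>\<omega>. max c (Max ((\<lambda>i. \<bar>x i\<bar> * X i \<omega>) ` {1..d})))"
proof (rule Bochner_Integration.integrable_bound)
  show "integrable M (\<lambda>\<omega>. \<bar>c\<bar> + (\<Sum>i\<in>{1..d}. \<bar>x i\<bar> * \<bar>X i \<omega>\<bar>))"
  proof -
    interpret prob_space M by (fact P)
    show ?thesis
    using H by (intro Bochner_Integration.integrable_add integrable_sum integrable_mult_right
        integrable_abs) (auto simp: cond_H_def)
  qed
  show "(\<lambda>\<omega>. max c (Max ((\<lambda>i. \<bar>x i\<bar> * X i \<omega>) ` {1..d}))) \<in> borel_measurable M"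
    by (rule W_meas[OF H])
  show "AE \<omega> in M. norm (max c (Max ((\<lambda>i. \<bar>x i\<bar> * X i \<omega>) ` {1..d})))
       \<le> norm (\<bar>c\<bar> + (\<Sum>i\<in>{1..d}. \<bar>x i\<bar> * \<bar>X i \<omega>\<bar>))"
  proof (rule AE_I2)
    fix \<omega>
    let ?S = "(\<lambda>i. \<bar>x i\<bar> * X i \<omega>) ` {1..d}"
    have "Max ?S \<in> ?S" using d by (intro Max_in) (auto simp: atLeastatMost_empty_iff)
    then obtain j where j: "j \<in> {1..d}" "Max ?S = \<bar>x j\<bar> * X j \<omega>" by auto
    have "\<bar>x j\<bar> * \<bar>X j \<omega>\<bar> \<le> (\<Sum>i\<in>{1..d}. \<bar>x i\<bar> * \<bar>X i \<omega>\<bar>)"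
      using j(1) by (intro member_le_sum) auto
    moreover have "0 \<le> (\<Sum>i\<in>{1..d}. \<bar>x i\<bar> * \<bar>X i \<omega>\<bar>)" by (intro sum_nonneg) auto
    moreover have "\<bar>max c (Max ?S)\<bar> \<le> \<bar>c\<bar> + \<bar>Max ?S\<bar>" by linarith
    ultimately show "norm (max c (Max ?S)) \<le> norm (\<bar>c\<bar> + (\<Sum>i\<in>{1..d}. \<bar>x i\<bar> * \<bar>X i \<omega>\<bar>))"
      using j(2) by (simp add: abs_mult)
  qed
qed


lemma key:
  assumes P: "prob_space M" and H: "cond_H M X d" and d: "d \<ge> 1"
    and tpos: "\<And>i. i \<in> {1..d} \<Longrightarrow> 0 < t i" and h: "0 < h"
  shows "h * joint_cdf M X d t
           \<le> normX M X d (\<lambda>i. if i = 0 then 1 + h else 1 / t i) - normX M X d (\<lambda>i. if i = 0 then 1 else 1 / t i)"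
    and "normX M X d (\<lambda>i. if i = 0 then 1 + h else 1 / t i) - normX M X d (\<lambda>i. if i = 0 then 1 else 1 / t i)
           \<le> h * joint_cdf M X d (\<lambda>i. (1 + h) * t i)"
proof -
  interpret prob_space M by (fact P)
  define xa where "xa c = (\<lambda>i::nat. if i = 0 then c else 1 / t i)" for c :: real
  define Z where "Z \<omega> = Max ((\<lambda>i. X i \<omega> / t i) ` {1..d})" for \<omega>
  have fin: "finite ((\<lambda>i. X i \<omega> / t i) ` {1..d})" "(\<lambda>i. X i \<omega> / t i) ` {1..d} \<noteq> {}" for \<omega>
    using d by (auto simp: atLeastatMost_empty_iff)
  have eqc: "Max ((\<lambda>i. \<bar>xa c i\<bar> * X i \<omega>) ` {1..d}) = Z \<omega>" for c \<omega>
  proof -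
    have "(\<lambda>i. \<bar>xa c i\<bar> * X i \<omega>) ` {1..d} = (\<lambda>i. X i \<omega> / t i) ` {1..d}"
    proof (rule image_cong)
      fix i assume "i \<in> {1..d}"
      then have "0 < t i" "i \<noteq> 0" using tpos by auto
      then show "\<bar>xa c i\<bar> * X i \<omega> = X i \<omega> / t i" by (simp add: xa_def)
    qed simp
    then show ?thesis by (simp add: Z_def)
  qed
  have nX: "normX M X d (xa c) = (\<integral>\<omega>. max \<bar>c\<bar> (Z \<omega>) \<partial>M)" for c
    unfolding normX_alt[OF d] eqc by (simp add: xa_def)
  have iX: "integrable M (\<lambda>\<omega>. max c (Z \<omega>))" for c
    using W_int[OF P H d, of c "xa c'" for c'] unfolding eqc by simp
  have diff: "normX M X d (xa (1 + h)) - normX M X d (xa 1) = (\<integral>\<omega>. max (1 + h) (Z \<omega>) - max 1 (Z \<omega>) \<partial>M)"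
    using h by (simp add: nX Bochner_Integration.integral_diff[OF iX iX])
  have iI: "integrable M (\<lambda>\<omega>. h * indicator A \<omega>)" if "A \<in> sets M" for A
    using that by (intro integrable_mult_right integrable_real_indicator) (auto simp: less_top[symmetric])
  have II: "(\<integral>\<omega>. h * indicator A \<omega> \<partial>M) = h * measure M A" if "A \<in> sets M" for A
    using that by (simp add: Int_absorb2 sets.sets_into_space)
  show "h * joint_cdf M X d t \<le> normX M X d (xa (1 + h)) - normX M X d (xa 1)"
  proof -
    have "h * joint_cdf M X d t = (\<integral>\<omega>. h * indicator (cset M X d t) \<omega> \<partial>M)"
      by (simp add: II cset_sets[OF H] cdf_cset)
    also have "\<dots> \<le> (\<integral>\<omega>. max (1 + h) (Z \<omega>) - max 1 (Z \<omega>) \<partial>M)"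
    proof (rule integral_mono[OF iI[OF cset_sets[OF H]] Bochner_Integration.integrable_diff[OF iX iX]])
      fix \<omega> assume "\<omega> \<in> space M"
      show "h * indicator (cset M X d t) \<omega> \<le> max (1 + h) (Z \<omega>) - max 1 (Z \<omega>)"
      proof (cases "\<omega> \<in> cset M X d t")
        case True
        have "Z \<omega> \<le> 1" unfolding Z_def Max_le_iff[OF fin]
          using True tpos by (auto simp: cset_def)
        then show ?thesis using True h by simp
      next
        case False
        then show ?thesis using h by simp
      qed
    qed
    finally show ?thesis using diff by simp
  qed
  show "normX M X d (xa (1 + h)) - normX M X d (xa 1) \<le> h * joint_cdf M X d (\<lambda>i. (1 + h) * t i)"
  proof -
    have "(\<integral>\<omega>. max (1 + h) (Z \<omega>) - max 1 (Z \<omega>) \<partial>M)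
          \<le> (\<integral>\<omega>. h * indicator (cset M X d (\<lambda>i. (1 + h) * t i)) \<omega> \<partial>M)"
    proof (rule integral_mono[OF Bochner_Integration.integrable_diff[OF iX iX] iI[OF cset_sets[OF H]]])
      fix \<omega> assume sp: "\<omega> \<in> space M"
      show "max (1 + h) (Z \<omega>) - max 1 (Z \<omega>) \<le> h * indicator (cset M X d (\<lambda>i. (1 + h) * t i)) \<omega>"
      proof (cases "\<omega> \<in> cset M X d (\<lambda>i. (1 + h) * t i)")
        case True
        then show ?thesis using h by simp
      next
        case False
        then obtain i where i: "i \<in> {1..d}" "(1 + h) * t i < X i \<omega>" using sp
          by (auto simp: cset_def not_le)
        then have "1 + h < X i \<omega> / t i" using tpos[OF i(1)] by (simp add: field_simps)
        moreover have "X i \<omega> / t i \<le> Z \<omega>" unfolding Z_def using fin i(1) by auto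
        ultimately show ?thesis using False h by simp
      qed
    qed
    also have "\<dots> = h * joint_cdf M X d (\<lambda>i. (1 + h) * t i)"
      by (simp add: II cset_sets[OF H] cdf_cset)
    finally show ?thesis using diff by simp
  qed
qed


lemma rev_pos:
  assumes PM: "prob_space M" and PN: "prob_space N" and HX: "cond_H M X d" and HY: "cond_H N Y d"
    and d: "d \<ge> 1" and eq: "\<forall>x. normX M X d x = normX N Y d x"
    and tpos: "\<And>i. i \<in> {1..d} \<Longrightarrow> 0 < t i"
  shows "joint_cdf M X d t \<le> joint_cdf N Y d t"
proof -
  define s where "s n = (\<lambda>i. (1 + inverse (real (Suc n))) * t i)" for n
  have lim: "(\<lambda>n. joint_cdf N Y d (s n)) \<longlonglongrightarrow> joint_cdf N Y d t"
  proof (rule cdf_decseq[OF PN HY])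
    fix n i assume "i \<in> {1..d}"
    then have "0 < t i" using tpos by auto
    moreover have "inverse (real (Suc (Suc n))) \<le> inverse (real (Suc n))"
      by (simp add: le_imp_inverse_le)
    ultimately show "s (Suc n) i \<le> s n i" unfolding s_def by (intro mult_right_mono) auto
  next
    fix i
    have "(\<lambda>n. (1 + inverse (real (Suc n))) * t i) \<longlonglongrightarrow> (1 + 0) * t i"
      by (intro tendsto_intros LIMSEQ_inverse_real_of_nat)
    then show "(\<lambda>n. s n i) \<longlonglongrightarrow> t i" by (simp add: s_def)
  qed
  show ?thesis
  proof (rule LIMSEQ_le_const[OF lim], intro exI allI impI)
    fix n :: nat
    define h where "h = inverse (real (Suc n))"
    have h: "0 < h" by (simp add: h_def)
    have "h * joint_cdf M X d t \<le> h * joint_cdf N Y d (\<lambda>i. (1 + h) * t i)"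
      using key(1)[of M X d t h, OF PM HX d tpos h] key(2)[of N Y d t h, OF PN HY d tpos h] eq by simp
    then show "joint_cdf M X d t \<le> joint_cdf N Y d (s n)"
      using h by (simp add: s_def h_def)
  qed
qed

lemma cdf_neg:
  assumes PM: "prob_space M" and HX: "cond_H M X d" and i: "i \<in> {1..d}" "t i < 0"
  shows "joint_cdf M X d t = 0"
proof -
  have "AE \<omega> in M. 0 \<le> X i \<omega>" using HX i by (auto simp: cond_H_def)
  then have "AE \<omega> in M. \<not> (\<forall>i\<in>{1..d}. X i \<omega> \<le> t i)"
    by eventually_elim (use i in force)
  then have "emeasure M {\<omega>\<in>space M. \<forall>i\<in>{1..d}. X i \<omega> \<le> t i} = 0"
    by (rule emeasure_eq_0_AE)
  then show ?thesis by (simp add: joint_cdf_def measure_def)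
qed

lemma rev_all:
  assumes PM: "prob_space M" and PN: "prob_space N" and HX: "cond_H M X d" and HY: "cond_H N Y d"
    and d: "d \<ge> 1" and eq: "\<forall>x. normX M X d x = normX N Y d x"
  shows "joint_cdf M X d t = joint_cdf N Y d t"
proof -
  have eq': "\<forall>x. normX N Y d x = normX M X d x" using eq by simp
  have pos: "joint_cdf M X d u = joint_cdf N Y d u" if "\<And>i. i \<in> {1..d} \<Longrightarrow> 0 < u i" for u
    using rev_pos[of M N X d Y u, OF PM PN HX HY d eq that] rev_pos[of N M Y d X u, OF PN PM HY HX d eq' that] by simp
  show ?thesis
  proof (cases "\<exists>i\<in>{1..d}. t i < 0")
    case True
    then show ?thesis using cdf_neg[OF PM HX] cdf_neg[OF PN HY] by auto
  next
    case False
    then have nn: "\<And>i. i \<in> {1..d} \<Longrightarrow> 0 \<le> t i" by (meson not_le)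
    define s where "s n = (\<lambda>i. t i + inverse (real (Suc n)))" for n
    have dec: "s (Suc n) i \<le> s n i" for n i
      by (simp add: s_def le_imp_inverse_le)
    have lim: "(\<lambda>n. s n i) \<longlonglongrightarrow> t i" for i
    proof -
      have "(\<lambda>n. t i + inverse (real (Suc n))) \<longlonglongrightarrow> t i + 0"
        by (intro tendsto_intros LIMSEQ_inverse_real_of_nat)
      then show ?thesis by (simp add: s_def)
    qed
    have "(\<lambda>n. joint_cdf M X d (s n)) \<longlonglongrightarrow> joint_cdf M X d t"
      by (rule cdf_decseq[OF PM HX dec lim])
    moreover have "(\<lambda>n. joint_cdf M X d (s n)) \<longlonglongrightarrow> joint_cdf N Y d t"
    proof -
      have "joint_cdf M X d (s n) = joint_cdf N Y d (s n)" for n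
      proof (rule pos)
        fix i assume "i \<in> {1..d}"
        then show "0 < s n i" using nn[of i] by (simp add: s_def add_nonneg_pos)
      qed
      then show ?thesis using cdf_decseq[OF PN HY dec lim] by simp
    qed
    ultimately show ?thesis by (rule LIMSEQ_unique)
  qed
qed


lemma fwd_lim:
  assumes P: "prob_space M" and H: "cond_H M X d" and d: "d \<ge> 1" and s: "\<bar>x 0\<bar> \<le> s"
  shows "(\<lambda>n. joint_cdf M X d (\<lambda>i. if x i = 0 then real n else s / \<bar>x i\<bar>))
     \<longlonglongrightarrow> measure M {\<omega>\<in>space M. max \<bar>x 0\<bar> (Max ((\<lambda>i. \<bar>x i\<bar> * X i \<omega>) ` {1..d})) \<le> s}"
proof -
  interpret prob_space M by (fact P)
  define tn where "tn n = (\<lambda>i. if x i = 0 then real n else s / \<bar>x i\<bar>)" for n :: nat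
  have fin: "finite ((\<lambda>i. \<bar>x i\<bar> * X i \<omega>) ` {1..d})" "(\<lambda>i. \<bar>x i\<bar> * X i \<omega>) ` {1..d} \<noteq> {}" for \<omega>
    using d by (auto simp: atLeastatMost_empty_iff)
  have s0: "0 \<le> s" using s by linarith
  have "(\<lambda>n. measure M (cset M X d (tn n))) \<longlonglongrightarrow> measure M (\<Union>n. cset M X d (tn n))"
  proof (rule finite_Lim_measure_incseq)
    show "range (\<lambda>n. cset M X d (tn n)) \<subseteq> sets M" using cset_sets[OF H] by auto
    show "incseq (\<lambda>n. cset M X d (tn n))"
    proof (rule incseq_SucI)
      fix n show "cset M X d (tn n) \<subseteq> cset M X d (tn (Suc n))"
        unfolding cset_def tn_def by (auto intro: order_trans)
    qed
  qed
  moreover have "(\<Union>n. cset M X d (tn n)) =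
      {\<omega>\<in>space M. max \<bar>x 0\<bar> (Max ((\<lambda>i. \<bar>x i\<bar> * X i \<omega>) ` {1..d})) \<le> s}"
  proof
    show "(\<Union>n. cset M X d (tn n)) \<subseteq> {\<omega>\<in>space M. max \<bar>x 0\<bar> (Max ((\<lambda>i. \<bar>x i\<bar> * X i \<omega>) ` {1..d})) \<le> s}"
    proof
      fix \<omega> assume "\<omega> \<in> (\<Union>n. cset M X d (tn n))"
      then obtain n where n: "\<omega> \<in> space M" "\<And>i. i \<in> {1..d} \<Longrightarrow> X i \<omega> \<le> tn n i"
        unfolding cset_def by blast
      have "\<bar>x i\<bar> * X i \<omega> \<le> s" if "i \<in> {1..d}" for i
      proof (cases "x i = 0")
        case True then show ?thesis using s0 by simp
      next
        case False
        then have "X i \<omega> \<le> s / \<bar>x i\<bar>" using n(2)[OF that] by (simp add: tn_def)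
        then show ?thesis using False by (simp add: field_simps)
      qed
      then have "Max ((\<lambda>i. \<bar>x i\<bar> * X i \<omega>) ` {1..d}) \<le> s"
        unfolding Max_le_iff[OF fin] by blast
      then show "\<omega> \<in> {\<omega>\<in>space M. max \<bar>x 0\<bar> (Max ((\<lambda>i. \<bar>x i\<bar> * X i \<omega>) ` {1..d})) \<le> s}"
        using n(1) s by auto
    qed
    show "{\<omega>\<in>space M. max \<bar>x 0\<bar> (Max ((\<lambda>i. \<bar>x i\<bar> * X i \<omega>) ` {1..d})) \<le> s} \<subseteq> (\<Union>n. cset M X d (tn n))"
    proof
      fix \<omega> assume a: "\<omega> \<in> {\<omega>\<in>space M. max \<bar>x 0\<bar> (Max ((\<lambda>i. \<bar>x i\<bar> * X i \<omega>) ` {1..d})) \<le> s}"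
      then have sp: "\<omega> \<in> space M" and le: "\<And>i. i \<in> {1..d} \<Longrightarrow> \<bar>x i\<bar> * X i \<omega> \<le> s"
        by (auto simp: Max_le_iff[OF fin])
      obtain n where n: "(\<Sum>i\<in>{1..d}. \<bar>X i \<omega>\<bar>) \<le> real n" using real_arch_simple by blast
      have "X i \<omega> \<le> tn n i" if "i \<in> {1..d}" for i
      proof (cases "x i = 0")
        case True
        have "X i \<omega> \<le> \<bar>X i \<omega>\<bar>" by simp
        also have "\<dots> \<le> (\<Sum>i\<in>{1..d}. \<bar>X i \<omega>\<bar>)" using that by (intro member_le_sum) auto
        finally show ?thesis using n True by (simp add: tn_def)
      next
        case False
        then show ?thesis using le[OF that] by (simp add: tn_def field_simps)
      qed
      then have "\<omega> \<in> cset M X d (tn n)" using sp by (simp add: cset_def)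
      then show "\<omega> \<in> (\<Union>n. cset M X d (tn n))" by blast
    qed
  qed
  ultimately show ?thesis by (simp add: cdf_cset tn_def)
qed

lemma fwd_set:
  assumes PM: "prob_space M" and PN: "prob_space N" and HX: "cond_H M X d" and HY: "cond_H N Y d"
    and d: "d \<ge> 1" and eq: "\<forall>t. joint_cdf M X d t = joint_cdf N Y d t"
  shows "measure M {\<omega>\<in>space M. max \<bar>x 0\<bar> (Max ((\<lambda>i. \<bar>x i\<bar> * X i \<omega>) ` {1..d})) \<le> s}
       = measure N {\<omega>\<in>space N. max \<bar>x 0\<bar> (Max ((\<lambda>i. \<bar>x i\<bar> * Y i \<omega>) ` {1..d})) \<le> s}"
proof (cases "\<bar>x 0\<bar> \<le> s")
  case True
  show ?thesis
    using LIMSEQ_unique[OF fwd_lim[of M X d x s, OF PM HX d True]] fwd_lim[of N Y d x s, OF PN HY d True] eq by simp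
next
  case False
  then have "{\<omega>\<in>space M. max \<bar>x 0\<bar> (Max ((\<lambda>i. \<bar>x i\<bar> * X i \<omega>) ` {1..d})) \<le> s} = {}"
    "{\<omega>\<in>space N. max \<bar>x 0\<bar> (Max ((\<lambda>i. \<bar>x i\<bar> * Y i \<omega>) ` {1..d})) \<le> s} = {}" by auto
  then show ?thesis by (simp only: measure_empty)
qed

theorem theorem2p2:
  fixes M :: "'a measure" and N :: "'b measure"
    and X :: "nat \<Rightarrow> 'a \<Rightarrow> real" and Y :: "nat \<Rightarrow> 'b \<Rightarrow> real" and d :: nat
  assumes "d \<ge> 1"
    and "prob_space M" and "prob_space N"
    and "cond_H M X d" and "cond_H N Y d"
  shows "(\<forall>t. joint_cdf M X d t = joint_cdf N Y d t) \<longleftrightarrow>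
         (\<forall>x. normX M X d x = normX N Y d x)"
proof
  assume eq: "\<forall>x. normX M X d x = normX N Y d x"
  show "\<forall>t. joint_cdf M X d t = joint_cdf N Y d t"
    using rev_all[OF assms(2,3,4,5,1) eq] by blast
next
  assume eq: "\<forall>t. joint_cdf M X d t = joint_cdf N Y d t"
  show "\<forall>x. normX M X d x = normX N Y d x"
  proof
    fix x
    interpret PM: prob_space M by (fact assms(2))
    interpret PN: prob_space N by (fact assms(3))
    define WX where "WX \<omega> = max \<bar>x 0\<bar> (Max ((\<lambda>i. \<bar>x i\<bar> * X i \<omega>) ` {1..d}))" for \<omega>
    define WY where "WY \<omega> = max \<bar>x 0\<bar> (Max ((\<lambda>i. \<bar>x i\<bar> * Y i \<omega>) ` {1..d}))" for \<omega>
    have mX[measurable]: "WX \<in> borel_measurable M" unfolding WX_def by (rule W_meas[OF assms(4)])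
    have mY[measurable]: "WY \<in> borel_measurable N" unfolding WY_def by (rule W_meas[OF assms(5)])
    have "cdf (distr M borel WX) = cdf (distr N borel WY)"
    proof
      fix s
      have "cdf (distr M borel WX) s = measure M (WX -` {..s} \<inter> space M)"
        by (simp add: cdf_def measure_distr)
      also have "\<dots> = measure M {\<omega>\<in>space M. WX \<omega> \<le> s}"
        by (simp add: vimage_def Int_def conj_commute)
      also have "\<dots> = measure N {\<omega>\<in>space N. WY \<omega> \<le> s}"
        unfolding WX_def WY_def by (rule fwd_set[OF assms(2,3,4,5,1) eq])
      also have "\<dots> = measure N (WY -` {..s} \<inter> space N)"
        by (simp add: vimage_def Int_def conj_commute)
      also have "\<dots> = cdf (distr N borel WY) s"
        by (simp add: cdf_def measure_distr)
      finally show "cdf (distr M borel WX) s = cdf (distr N borel WY) s" .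
    qed
    then have D: "distr M borel WX = distr N borel WY"
      by (intro cdf_unique PM.real_distribution_distr PN.real_distribution_distr mX mY)
    have "normX M X d x = (\<integral>\<omega>. WX \<omega> \<partial>M)" unfolding normX_alt[OF assms(1)] WX_def ..
    also have "\<dots> = (\<integral>z. z \<partial>distr M borel WX)" by (simp add: integral_distr)
    also have "\<dots> = (\<integral>z. z \<partial>distr N borel WY)" by (simp add: D)
    also have "\<dots> = (\<integral>\<omega>. WY \<omega> \<partial>N)" by (simp add: integral_distr)
    also have "\<dots> = normX N Y d x" unfolding normX_alt[OF assms(1)] WY_def ..
    finally show "normX M X d x = normX N Y d x" .
  qed
qed

end
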